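(* Consider the multi-agent system $\dot{x}_i=Ax_i+Bu_i$, $i=1,\dots,N$, with $x_i\in\mathbb{R}^n$, $u_i\in\mathbb{R}^m$, $A\in\mathbb{R}^{n\times n}$, $B\in\mathbb{R}^{n\times m}$. The communication topology is a weighted directed graph $\mathcal{G}=(V,E,W)$, $V=\{1,\dots,N\}$, with adjacency matrix $W=[w_{ij}]$, $w_{ij}\ge 0$ and $w_{ij}>0$ iff $(j,i)\in E$ (agent $j$ sends information to agent $i$). Suppose $\mathcal{G}$ has a directed spanning tree $\mathcal{T}$ with root node $N$, in which each node $i\in\{1,\dots,N-1\}$ has unique parent $k_i$ with $(k_i,i)\in E$, and suppose the root node $N$ of $\mathcal{T}$ is a root vertex in $\mathcal{G}$. Consider the protocol $$u_N=0,\qquad u_i=K_i\,w_{i,k_i}\,(x_{k_i}-x_i),\quad i=1,\dots,N-1,$$ with $K_i\in\mathbb{R}^{m\times n}$. If the gains $K_i$ are chosen such that $A-w_{i,k_i}BK_i$ is Hurwitz for each $i=1,\dots,N-1$, then the closed-loop system achieves asymptotic state consensus, i.e. $\lim_{t\to\infty}\|x_i(t)-x_j(t)\|=0$ for all $i,j\in\{1,\dots,N\}$ and all initial conditions $x_1(0),\dots,x_N(0)\in\mathbb{R}^n$.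
   Context: A matrix is Hurwitz if all its eigenvalues have negative real part. A directed spanning tree of $\mathcal{G}$ rooted at $N$ is a subgraph using edges of $\mathcal{G}$ containing a unique directed path from $N$ to every other vertex. A root vertex of $\mathcal{G}$ is a vertex from which there is a directed path to every other vertex. *)

theory Defs
  imports "HOL-Analysis.Analysis"
begin

definition cmat :: "real^'n^'n \<Rightarrow> complex^'n^'n" where
  "cmat A = (\<chi> i j. complex_of_real (A $ i $ j))"

definition eigenvalue :: "real^'n^'n \<Rightarrow> complex \<Rightarrow> bool" where
  "eigenvalue A c \<longleftrightarrow> (\<exists>v::complex^'n. v \<noteq> 0 \<and> cmat A *v v = c *s v)"

definition hurwitz :: "real^'n^'n \<Rightarrow> bool" where
  "hurwitz A \<longleftrightarrow> (\<forall>c. eigenvalue A c \<longrightarrow> Re c < 0)"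

definition graph_edges :: "nat \<Rightarrow> (nat \<Rightarrow> nat \<Rightarrow> real) \<Rightarrow> (nat \<times> nat) set" where
  "graph_edges N W = {(j, i). j \<in> {1..N} \<and> i \<in> {1..N} \<and> W i j > 0}"

definition root_vertex :: "nat \<Rightarrow> (nat \<Rightarrow> nat \<Rightarrow> real) \<Rightarrow> nat \<Rightarrow> bool" where
  "root_vertex N W r \<longleftrightarrow> r \<in> {1..N} \<and> (\<forall>v\<in>{1..N}. (r, v) \<in> (graph_edges N W)\<^sup>*)"

text \<open>The parent map k describes a directed spanning tree of the graph rooted at N:
  every non-root node i has a parent k i, (k i, i) is an edge of the graph,
  and following parents from any node leads to the root N (so the tree contains
  a unique directed path from N to every vertex).\<close>
definition spanning_tree_parent :: "nat \<Rightarrow> (nat \<Rightarrow> nat \<Rightarrow> real) \<Rightarrow> (nat \<Rightarrow> nat) \<Rightarrow> bool" where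
  "spanning_tree_parent N W k \<longleftrightarrow>
     (\<forall>i\<in>{1..N-1}. k i \<in> {1..N} \<and> (k i, i) \<in> graph_edges N W \<and> (\<exists>p. (k ^^ p) i = N))"

end

theory Submission
  imports Defs "HOL-Computational_Algebra.Fundamental_Theorem_Algebra"
begin


fun Gop :: "complex^'n^'n \<Rightarrow> complex list \<Rightarrow> complex^'n \<Rightarrow> complex^'n" where
  "Gop C [] v = v"
| "Gop C (a#as) v = Gop C as (C *v v - a *s v)"

fun mpow :: "complex^'n^'n \<Rightarrow> nat \<Rightarrow> complex^'n^'n" where
  "mpow C 0 = mat 1"
| "mpow C (Suc i) = mpow C i ** C"

definition opev :: "complex^'n^'n \<Rightarrow> complex poly \<Rightarrow> complex^'n \<Rightarrow> complex^'n" where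
  "opev C p v = (\<Sum>i\<le>degree p. coeff p i *s (mpow C i *v v))"

lemma scale_sum_s: "(c::complex) *s (\<Sum>i\<in>A. f i) = (\<Sum>i\<in>A. c *s f i)"
  by (simp add: vec_eq_iff sum_distrib_left sum_component)

lemma opev_ext: "degree p \<le> n \<Longrightarrow> opev C p v = (\<Sum>i\<le>n. coeff p i *s (mpow C i *v v))"
  unfolding opev_def
  by (rule sum.mono_neutral_left) (auto simp: coeff_eq_0)

lemma opev_lin: "opev C ([:-a,1:]*p) v = opev C p (C *v v - a *s v)"
proof -
  define n where "n = Suc (degree p)"
  have dp: "degree p \<le> n" by (simp add: n_def)
  have d1: "degree [:-a,1::complex:] = 1" by simp
  have d: "degree ([:-a,1:]*p) \<le> n"
    using degree_mult_le[of "[:-a,1:]" p] unfolding d1 n_def by linarith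
  have c: "coeff ([:-a,1:]*p) i = - a * coeff p i + (case i of 0 \<Rightarrow> 0 | Suc j \<Rightarrow> coeff p j)" for i
    by (simp add: coeff_pCons split: nat.splits)
  have s1: "opev C ([:-a,1:]*p) v = (\<Sum>i\<le>n. (- a * coeff p i) *s (mpow C i *v v))
        + (\<Sum>i\<le>n. (case i of 0 \<Rightarrow> 0 | Suc j \<Rightarrow> coeff p j) *s (mpow C i *v v))"
    unfolding opev_ext[OF d] c sum.distrib[symmetric] by (rule sum.cong) (auto simp: vector_sadd_rdistrib)
  have s2: "(\<Sum>i\<le>n. (case i of 0 \<Rightarrow> 0 | Suc j \<Rightarrow> coeff p j) *s (mpow C i *v v))
      = (\<Sum>j\<le>degree p. coeff p j *s (mpow C (Suc j) *v v))"
    unfolding n_def sum.atMost_Suc_shift by simp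
  have s3: "(\<Sum>i\<le>n. (- a * coeff p i) *s (mpow C i *v v)) = - a *s opev C p v"
    unfolding opev_ext[OF dp] scale_sum_s by (rule sum.cong) (auto simp: vector_smult_assoc)
  have s4: "(\<Sum>j\<le>degree p. coeff p j *s (mpow C (Suc j) *v v)) = opev C p (C *v v)"
    unfolding opev_def by (rule sum.cong) (auto simp: matrix_vector_mul_assoc)
  have s5: "opev C p (C *v v - a *s v) = opev C p (C *v v) - a *s opev C p v"
    unfolding opev_def scale_sum_s sum_subtractf[symmetric]
    by (rule sum.cong) (auto simp: matrix_vector_mult_diff_distrib vector_scalar_commute vector_ssub_ldistrib vector_smult_assoc mult.commute)
  show ?thesis unfolding s1 s2 s3 s4 s5 by simp
qed

lemma opev_prod: "opev C (\<Prod>x\<leftarrow>as. [:-x,1:]) v = Gop C as v"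
proof (induction as arbitrary: v)
  case Nil
  show ?case by (simp add: opev_def)
next
  case (Cons a as)
  show ?case using opev_lin[of C a "\<Prod>x\<leftarrow>as. [:-x,1:]" v] Cons by simp
qed

lemma opev_smult: "opev C (smult c p) v = c *s opev C p v"
proof -
  have "degree (smult c p) \<le> degree p" by (rule degree_smult_le)
  then show ?thesis
    by (simp add: opev_ext[of _ "degree p"] opev_def scale_sum_s vector_smult_assoc)
qed

lemma Gop_append: "Gop C (xs @ ys) v = Gop C ys (Gop C xs v)"
  by (induction xs arbitrary: v) auto

lemma Gop_inj: "(\<forall>a\<in>set ys. \<forall>w. C *v w = a *s w \<longrightarrow> w = 0) \<Longrightarrow> Gop C ys w = 0 \<Longrightarrow> w = 0"
proof (induction ys arbitrary: w)
  case Nil then show ?case by simp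
next
  case (Cons a ys)
  have "\<forall>a\<in>set ys. \<forall>w. C *v w = a *s w \<longrightarrow> w = 0" using Cons.prems(1) by simp
  moreover have "Gop C ys (C *v w - a *s w) = 0" using Cons.prems(2) by simp
  ultimately have "C *v w - a *s w = 0" using Cons.IH by blast
  then have "C *v w = a *s w" by simp
  then show ?case using Cons.prems(1) by simp
qed

lemma sum_mv: "(\<Sum>i\<in>A. f i) *v (v::complex^'n) = (\<Sum>i\<in>A. f i *v v)"
  by (induction A rule: infinite_finite_induct) (auto simp: matrix_vector_mult_add_rdistrib)

lemma scaleR_mv: "(r *\<^sub>R (M::complex^'n^'n)) *v v = r *\<^sub>R (M *v v)"
  by (simp add: vec_eq_iff matrix_vector_mult_def scaleR_sum_right)

lemma ofreal_s: "complex_of_real r *s (w::complex^'n) = r *\<^sub>R w"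
  by (rule vec_eq_iff[THEN iffD2], rule allI, subst vector_scaleR_component) (simp add: scaleR_conv_of_real)

lemma annih_coeffs:
  fixes C :: "complex^'n^'n"
  assumes "(\<Sum>i\<le>D. c i *\<^sub>R mpow C i) = 0" "iz \<le> D" "c iz \<noteq> 0"
  shows "\<exists>q. q \<noteq> 0 \<and> (\<forall>v. opev C q v = 0)"
proof -
  define q where "q = (\<Sum>i\<le>D. monom (complex_of_real (c i)) i)"
  have cq: "coeff q l = (if l \<le> D then complex_of_real (c l) else 0)" for l
    unfolding q_def by (simp add: coeff_sum coeff_monom)
  have "coeff q iz \<noteq> 0" using assms cq by simp
  then have q0: "q \<noteq> 0" by auto
  have dq: "degree q \<le> D" by (rule degree_le) (simp add: cq)
  have "opev C q v = 0" for v
  proof -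
    have "opev C q v = (\<Sum>i\<le>D. c i *\<^sub>R (mpow C i *v v))"
      unfolding opev_ext[OF dq] by (rule sum.cong) (auto simp: cq ofreal_s)
    also have "\<dots> = (\<Sum>i\<le>D. c i *\<^sub>R mpow C i) *v v"
      by (simp add: sum_mv scaleR_mv)
    finally show ?thesis using assms(1) by simp
  qed
  with q0 show ?thesis by blast
qed

lemma exists_annih:
  fixes C :: "complex^'n^'n"
  shows "\<exists>q. q \<noteq> 0 \<and> (\<forall>v. opev C q v = 0)"
proof (cases "inj_on (mpow C) {..DIM(complex^'n^'n)}")
  case True
  define D where "D = DIM(complex^'n^'n)"
  define S where "S = mpow C ` {..D}"
  have fS: "finite S" unfolding S_def by simp
  have "card S = Suc D" unfolding S_def using True D_def by (simp add: card_image)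
  then have "dependent S" by (intro dependent_biggerset) (simp add: D_def)
  then obtain u where u: "\<exists>v\<in>S. u v \<noteq> 0" "(\<Sum>v\<in>S. u v *\<^sub>R v) = 0"
    using real_vector.dependent_finite[OF fS] by blast
  then obtain i0 where i0: "i0 \<le> D" "u (mpow C i0) \<noteq> 0" unfolding S_def by auto
  have "(\<Sum>i\<le>D. u (mpow C i) *\<^sub>R mpow C i) = (\<Sum>v\<in>S. u v *\<^sub>R v)"
    unfolding S_def using True D_def by (simp add: sum.reindex)
  with u have "(\<Sum>i\<le>D. u (mpow C i) *\<^sub>R mpow C i) = 0" by simp
  then show ?thesis using annih_coeffs[where D=D and c="\<lambda>i. u (mpow C i)" and C=C and iz=i0] i0 by simp
next
  case False
  then obtain i j where ij: "i \<le> DIM(complex^'n^'n)" "j \<le> DIM(complex^'n^'n)" "i \<noteq> j" "mpow C i = mpow C j"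
    unfolding inj_on_def by auto
  define c where "c l = (if l = i then 1 else if l = j then -1 else (0::real))" for l
  have "c l *\<^sub>R mpow C l = (if l = i then mpow C i else 0) - (if l = j then mpow C j else 0)" for l
    using ij by (auto simp: c_def)
  then have "(\<Sum>l\<le>DIM(complex^'n^'n). c l *\<^sub>R mpow C l) = 0"
    using ij by (simp add: sum_subtractf)
  then show ?thesis using annih_coeffs[where c=c and C=C and iz=i] ij by (simp add: c_def)
qed

lemma eig_annih:
  fixes C :: "complex^'n^'n"
  shows "\<exists>ls. (\<forall>l\<in>set ls. \<exists>v. v \<noteq> 0 \<and> C *v v = l *s v) \<and> (\<forall>v. Gop C ls v = 0)"
proof -
  obtain q where q: "q \<noteq> 0" "\<forall>v. opev C q v = 0" using exists_annih by blast
  obtain roots where r: "mset roots = proots q" using ex_mset by blast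
  define P where "P l = (\<exists>v. v \<noteq> 0 \<and> C *v v = l *s v)" for l
  define ls where "ls = filter P roots"
  define rs where "rs = filter (\<lambda>l. \<not> P l) roots"
  have "q = smult (lead_coeff q) (\<Prod>x\<in>#proots q. [:-x,1:])"
    using complex_poly_decompose_multiset[of q] by simp
  also have "(\<Prod>x\<in>#proots q. [:-x,1:]) = (\<Prod>x\<leftarrow>ls @ rs. [:-x,1:])"
  proof -
    have "mset (ls @ rs) = proots q" unfolding ls_def rs_def r[symmetric] by simp
    then show ?thesis by (metis mset_map prod_mset_prod_list)
  qed
  finally have qe: "q = smult (lead_coeff q) (\<Prod>x\<leftarrow>ls @ rs. [:-x,1:])" .
  have "Gop C ls v = 0" for v
  proof -
    have "0 = opev C q v" using q by simp
    also have "\<dots> = lead_coeff q *s Gop C rs (Gop C ls v)"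
      by (subst qe, subst opev_smult, subst opev_prod) (simp add: Gop_append)
    finally have "Gop C rs (Gop C ls v) = 0" using q(1)
      by (metis leading_coeff_0_iff vector_mul_eq_0)
    then show ?thesis
      by (rule Gop_inj[rotated]) (auto simp: rs_def P_def)
  qed
  moreover have "\<forall>l\<in>set ls. P l" by (simp add: ls_def)
  ultimately show ?thesis unfolding P_def by blast
qed



lemma deriv_at_pos:
  assumes "(z has_vector_derivative d) (at t within {0..})" "t > (0::real)"
  shows "(z has_vector_derivative d) (at t)"
proof -
  have "at t within {0..} = at t"
    by (rule at_within_interior) (use assms(2) in simp)
  with assms(1) show ?thesis by simp
qed

lemma phi_deriv:
  fixes z :: "real \<Rightarrow> 'a::real_inner"
  assumes "(z has_vector_derivative d) (at t)"
  shows "((\<lambda>s. z s \<bullet> z s) has_real_derivative 2 * (z t \<bullet> d)) (at t)"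
proof -
  have "(z has_derivative (\<lambda>x. x *\<^sub>R d)) (at t)" using assms by (simp add: has_vector_derivative_def)
  then have "((\<lambda>s. z s \<bullet> z s) has_derivative (\<lambda>x. z t \<bullet> (x *\<^sub>R d) + (x *\<^sub>R d) \<bullet> z t)) (at t)"
    by (intro has_derivative_inner)
  moreover have "(\<lambda>x. z t \<bullet> (x *\<^sub>R d) + (x *\<^sub>R d) \<bullet> z t) = (\<lambda>x. (2 * (z t \<bullet> d)) * x)"
    by (auto simp: inner_commute algebra_simps)
  ultimately show ?thesis by (simp add: has_field_derivative_def)
qed

lemma exp_decay_lim: "(a::real) > 0 \<Longrightarrow> ((\<lambda>t. c * exp (- a * (t - T))) \<longlongrightarrow> 0) at_top"
proof -
  assume a: "a > 0"
  have "filterlim (\<lambda>t. -T + t) at_top at_top"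
    by (rule filterlim_tendsto_add_at_top[OF tendsto_const filterlim_ident])
  then have "filterlim (\<lambda>t. a * (-T + t)) at_top at_top"
    using a by (intro filterlim_tendsto_pos_mult_at_top[OF tendsto_const a])
  then have "filterlim (\<lambda>t. a * (t - T)) at_top at_top" by simp
  then have "filterlim (\<lambda>t. - a * (t - T)) at_bot at_top"
    by (simp add: filterlim_uminus_at_bot)
  then have "((\<lambda>t. exp (- a * (t - T))) \<longlongrightarrow> 0) at_top"
    using exp_at_bot filterlim_compose by blast
  then show ?thesis using tendsto_mult_right_zero by blast
qed

lemma decay:
  fixes z d h :: "real \<Rightarrow> 'a::real_inner" and a :: real
  assumes a: "a > 0"
    and der: "\<forall>t\<ge>0. (z has_vector_derivative d t) (at t within {0..})"
    and ineq: "\<forall>t\<ge>0. z t \<bullet> d t \<le> - a * (norm (z t))^2 + norm (z t) * norm (h t)"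
    and h: "(h \<longlongrightarrow> 0) at_top"
  shows "(z \<longlongrightarrow> 0) at_top"
proof -
  define \<phi> where "\<phi> t = z t \<bullet> z t" for t
  have phi_nn: "\<phi> t \<ge> 0" for t unfolding \<phi>_def by simp
  have phin: "\<phi> t = (norm (z t))^2" for t unfolding \<phi>_def by (simp add: power2_norm_eq_inner)
  have dphi: "(\<phi> has_real_derivative 2 * (z t \<bullet> d t)) (at t)" if "t > 0" for t
    unfolding \<phi>_def[abs_def] using der that by (intro phi_deriv deriv_at_pos) auto
  have key: "2 * (z t \<bullet> d t) \<le> - a * \<phi> t + (norm (h t))^2 / a" if "t \<ge> 0" for t
  proof -
    define n where "n = norm (z t)"
    define m where "m = norm (h t)"
    have "0 \<le> (a * n - m)^2" by simp
    then have "2 * (a * n) * m \<le> (a * n)^2 + m^2" unfolding power2_diff by linarith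
    moreover have "(a * n)^2 = a * (a * n^2)" by (simp add: power2_eq_square)
    moreover have "m^2 = a * (m^2 / a)" using a by simp
    moreover have "a * (a * n^2 + m^2 / a) = a * (a * n^2) + a * (m^2/a)" by (rule distrib_left)
    moreover have "a * (2 * n * m) = 2 * (a * n) * m" by simp
    ultimately have "a * (2 * n * m) \<le> a * (a * n^2 + m^2 / a)"
      by linarith
    then have "2 * n * m \<le> a * n^2 + m^2 / a"
      using a by (rule mult_left_le_imp_le)
    moreover have "z t \<bullet> d t \<le> - a * n^2 + n * m" using ineq that by (simp add: n_def m_def)
    ultimately show ?thesis unfolding phin n_def[symmetric] m_def[symmetric]
      by linarith
  qed
  have "\<forall>\<^sub>F t in at_top. \<phi> t < \<epsilon>" if e: "\<epsilon> > 0" for \<epsilon>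
  proof -
    define \<delta> where "\<delta> = a * sqrt (\<epsilon> / 2)"
    have "\<delta> > 0" using a e by (simp add: \<delta>_def)
    then have "\<forall>\<^sub>F t in at_top. norm (h t) < \<delta>"
      using h by (simp add: tendsto_iff dist_norm)
    then obtain T0 where T0: "\<And>t. t \<ge> T0 \<Longrightarrow> norm (h t) < \<delta>"
      by (auto simp: eventually_at_top_linorder)
    define T where "T = max T0 1"
    have hb: "(norm (h t))^2 \<le> a * a * \<epsilon> / 2" if "t \<ge> T" for t
    proof -
      have "norm (h t) < \<delta>" using T0 that by (simp add: T_def)
      then have "(norm (h t))^2 \<le> \<delta>^2" by (intro power_mono) auto
      also have "\<delta>^2 = a * a * \<epsilon> / 2" 
      proof -
        have "(sqrt (\<epsilon> / 2))^2 = \<epsilon> / 2" using e by simp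
        then show ?thesis by (simp add: \<delta>_def power_mult_distrib power2_eq_square[of a])
      qed
      finally show ?thesis .
    qed
    define \<rho> where "\<rho> s = exp (a * s) * (\<phi> s - \<epsilon> / 2)" for s
    have bound: "\<phi> t \<le> \<epsilon> / 2 + \<phi> T * exp (- a * (t - T))" if "t \<ge> T" for t
    proof -
      have "\<rho> T \<ge> \<rho> t"
      proof (rule DERIV_nonpos_imp_nonincreasing[OF that])
        fix s assume s: "T \<le> s" "s \<le> t"
        then have s0: "s > 0" by (simp add: T_def)
        have "(\<rho> has_real_derivative
            exp (a * s) * a * (\<phi> s - \<epsilon> / 2) + exp (a * s) * (2 * (z s \<bullet> d s))) (at s)"
        proof -
          have e1: "((\<lambda>s. exp (a * s)) has_real_derivative exp (a * s) * a) (at s)"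
            using DERIV_exp[of "a * s"] DERIV_cmult_Id[of a s] DERIV_chain2 by blast
          have e2: "((\<lambda>s. \<phi> s - \<epsilon> / 2) has_real_derivative 2 * (z s \<bullet> d s) - 0) (at s)"
            by (rule DERIV_diff[OF dphi[OF s0] DERIV_const])
          show ?thesis unfolding \<rho>_def[abs_def]
            using DERIV_mult'[OF e1 e2] by (simp add: algebra_simps)
        qed
        moreover have "exp (a * s) * a * (\<phi> s - \<epsilon> / 2) + exp (a * s) * (2 * (z s \<bullet> d s)) \<le> 0"
        proof -
          have "a * (\<phi> s - \<epsilon> / 2) + 2 * (z s \<bullet> d s) \<le> a * (\<phi> s - \<epsilon> / 2) - a * \<phi> s + (norm (h s))^2 / a"
            using key[of s] s0 by simp
          also have "\<dots> \<le> 0"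
          proof -
            have "(norm (h s))^2 / a \<le> a * \<epsilon> / 2"
              using hb[OF s(1)] a by (simp add: divide_simps) (simp add: algebra_simps)
            moreover have "a * (\<phi> s - \<epsilon> / 2) - a * \<phi> s = - (a * \<epsilon> / 2)"
              by (simp add: algebra_simps)
            ultimately show ?thesis by linarith
          qed
          finally have "a * (\<phi> s - \<epsilon> / 2) + 2 * (z s \<bullet> d s) \<le> 0" .
          then have "exp (a * s) * (a * (\<phi> s - \<epsilon> / 2) + 2 * (z s \<bullet> d s)) \<le> 0"
            by (simp add: mult_nonneg_nonpos)
          then show ?thesis by (simp add: algebra_simps)
        qed
        ultimately show "\<exists>y. (\<rho> has_real_derivative y) (at s) \<and> y \<le> 0" by blast
      qed
      then have "exp (a * t) * (\<phi> t - \<epsilon> / 2) \<le> exp (a * T) * (\<phi> T - \<epsilon> / 2)"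
        by (simp add: \<rho>_def)
      also have "\<dots> \<le> exp (a * T) * \<phi> T" using e by simp
      finally have "\<phi> t - \<epsilon> / 2 \<le> exp (a * T) * \<phi> T / exp (a * t)"
        by (simp add: pos_le_divide_eq mult.commute)
      also have "exp (a * T) * \<phi> T / exp (a * t) = \<phi> T * exp (- a * (t - T))"
      proof -
        have "exp (- a * (t - T)) = exp (a * T - a * t)" by (simp add: algebra_simps)
        also have "\<dots> = exp (a * T) / exp (a * t)" by (rule exp_diff)
        finally show ?thesis by simp
      qed
      finally show ?thesis by simp
    qed
    have "\<forall>\<^sub>F t in at_top. \<phi> T * exp (- a * (t - T)) < \<epsilon> / 2"
      by (rule order_tendstoD(2)[OF exp_decay_lim[OF a]]) (use e in simp)
    moreover have "\<forall>\<^sub>F t in at_top. t \<ge> T" by (simp add: eventually_ge_at_top)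
    ultimately show ?thesis
      by eventually_elim (use bound in fastforce)
  qed
  then have "(\<phi> \<longlongrightarrow> 0) at_top"
    by (intro tendstoI) (simp add: dist_norm phi_nn abs_of_nonneg)
  then have "((\<lambda>t. sqrt (\<phi> t)) \<longlongrightarrow> sqrt 0) at_top"
    by (rule tendsto_real_sqrt)
  moreover have "sqrt (\<phi> t) = norm (z t)" for t unfolding \<phi>_def by (simp add: norm_eq_sqrt_inner)
  ultimately have "((\<lambda>t. norm (z t)) \<longlongrightarrow> 0) at_top" by simp
  then show ?thesis by (rule tendsto_norm_zero_cancel)
qed


definition Lop :: "complex^'n^'n \<Rightarrow> complex \<Rightarrow> complex^'n \<Rightarrow> complex^'n" where
  "Lop C l v = C *v v - l *s v"

lemma Lop_bl: "bounded_linear (Lop C l)"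
proof -
  have "linear (Lop C l)"
  proof (rule linearI)
    fix x y show "Lop C l (x + y) = Lop C l x + Lop C l y"
      by (simp add: Lop_def matrix_vector_right_distrib vector_add_ldistrib)
  next
    fix r :: real and x
    show "Lop C l (r *\<^sub>R x) = r *\<^sub>R Lop C l x"
      unfolding Lop_def vec_eq_iff
      by (simp add: matrix_vector_mult_def scaleR_sum_right algebra_simps)
  qed
  then show ?thesis by (simp add: linear_conv_bounded_linear)
qed

lemma inner_smult_self: "(z::complex^'n) \<bullet> (l *s z) = Re l * (z \<bullet> z)"
  unfolding inner_vec_def
  by (simp add: sum_distrib_left inner_complex_def algebra_simps power2_eq_square)

lemma gop_decay:
  fixes C :: "complex^'n^'n"
  assumes "\<forall>l\<in>set ls. Re l < 0"
    and "\<forall>t\<ge>0. (z has_vector_derivative C *v z t + h t) (at t within {0..})"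
    and "(h \<longlongrightarrow> 0) at_top"
    and "\<forall>t\<ge>0. Gop C ls (z t) = 0"
  shows "(z \<longlongrightarrow> 0) at_top"
  using assms
proof (induction ls arbitrary: z h)
  case Nil
  have "\<forall>\<^sub>F t in at_top. z t = 0"
    unfolding eventually_at_top_linorder using Nil.prems(4) by auto
  then show ?case by (rule tendsto_eventually)
next
  case (Cons l ls)
  define w where "w t = Lop C l (z t)" for t
  define hw where "hw t = Lop C l (h t)" for t
  have dw: "(w has_vector_derivative C *v w t + hw t) (at t within {0..})" if "t \<ge> 0" for t
  proof -
    have "(w has_vector_derivative Lop C l (C *v z t + h t)) (at t within {0..})"
      unfolding w_def[abs_def]
      using bounded_linear.has_vector_derivative[OF Lop_bl] Cons.prems(2) that by blast
    moreover have "Lop C l (C *v z t + h t) = C *v w t + hw t"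
      unfolding w_def hw_def Lop_def
      by (simp add: matrix_vector_right_distrib vector_add_ldistrib matrix_vector_mult_diff_distrib
          vector_scalar_commute)
    ultimately show ?thesis by simp
  qed
  have hw: "(hw \<longlongrightarrow> 0) at_top"
    unfolding hw_def[abs_def]
    using bounded_linear.tendsto[OF Lop_bl Cons.prems(3)] by (simp add: Lop_def)
  have Gw: "\<forall>t\<ge>0. Gop C ls (w t) = 0"
    using Cons.prems(4) by (simp add: w_def Lop_def)
  have w0: "(w \<longlongrightarrow> 0) at_top"
    using Cons.IH[of w hw] Cons.prems(1) dw hw Gw by simp
  have a: "- Re l > 0" using Cons.prems(1) by simp
  show ?case
  proof (rule decay[OF a, where d="\<lambda>t. C *v z t + h t" and h="\<lambda>t. w t + h t"])
    show "\<forall>t\<ge>0. (z has_vector_derivative C *v z t + h t) (at t within {0..})"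
      using Cons.prems(2) by simp
    show "((\<lambda>t. w t + h t) \<longlongrightarrow> 0) at_top"
      using tendsto_add[OF w0 Cons.prems(3)] by simp
    show "\<forall>t\<ge>0. z t \<bullet> (C *v z t + h t) \<le> - (- Re l) * (norm (z t))\<^sup>2 + norm (z t) * norm (w t + h t)"
    proof (intro allI impI)
      fix t :: real
      have "C *v z t + h t = l *s z t + (w t + h t)"
        by (simp add: w_def Lop_def)
      then have "z t \<bullet> (C *v z t + h t) = Re l * (z t \<bullet> z t) + z t \<bullet> (w t + h t)"
        by (simp add: inner_add_right inner_smult_self)
      also have "\<dots> \<le> Re l * (norm (z t))^2 + norm (z t) * norm (w t + h t)"
        using norm_cauchy_schwarz[of "z t" "w t + h t"] by (simp add: power2_norm_eq_inner)
      finally show "z t \<bullet> (C *v z t + h t) \<le> - (- Re l) * (norm (z t))\<^sup>2 + norm (z t) * norm (w t + h t)"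
        by simp
    qed
  qed
qed


definition cv :: "real^'n \<Rightarrow> complex^'n" where
  "cv v = (\<chi> i. complex_of_real (v $ i))"

lemma cv_add: "cv (a + b) = cv a + cv b"
  by (simp add: cv_def vec_eq_iff)

lemma scaleR_cplx: "r *\<^sub>R (c::complex) = complex_of_real r * c"
  by (simp add: scaleR_conv_of_real)

lemma cv_bl: "bounded_linear cv"
proof -
  have "linear cv"
  proof (rule linearI)
    fix x y show "cv (x + y) = cv x + cv y" by (rule cv_add)
  next
    fix r :: real and x
    show "cv (r *\<^sub>R x) = r *\<^sub>R cv x"
      unfolding cv_def vec_eq_iff by (simp add: scaleR_cplx)
  qed
  then show ?thesis by (simp add: linear_conv_bounded_linear)
qed

lemma cv_zero: "cv 0 = 0" by (simp add: cv_def vec_eq_iff)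

lemma cv_mat: "cmat M *v cv v = cv (M *v v)"
  by (simp add: cv_def cmat_def vec_eq_iff matrix_vector_mult_def)

lemma cv_norm: "norm (cv v) = norm v"
  by (simp add: cv_def norm_vec_def)

lemma hurwitz_decay:
  fixes M :: "real^'n^'n" and e g :: "real \<Rightarrow> real^'n"
  assumes hw: "hurwitz M"
    and der: "\<forall>t\<ge>0. (e has_vector_derivative M *v e t + g t) (at t within {0..})"
    and g: "(g \<longlongrightarrow> 0) at_top"
  shows "(e \<longlongrightarrow> 0) at_top"
proof -
  obtain ls where ls: "\<forall>l\<in>set ls. \<exists>v. v \<noteq> 0 \<and> cmat M *v v = l *s v" "\<forall>v. Gop (cmat M) ls v = 0"
    using eig_annih by blast
  have re: "\<forall>l\<in>set ls. Re l < 0"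
    using ls(1) hw unfolding hurwitz_def eigenvalue_def by blast
  have dz: "\<forall>t\<ge>0. ((\<lambda>t. cv (e t)) has_vector_derivative cmat M *v cv (e t) + cv (g t)) (at t within {0..})"
  proof (intro allI impI)
    fix t :: real assume "t \<ge> 0"
    then have "((\<lambda>t. cv (e t)) has_vector_derivative cv (M *v e t + g t)) (at t within {0..})"
      using bounded_linear.has_vector_derivative[OF cv_bl] der by blast
    then show "((\<lambda>t. cv (e t)) has_vector_derivative cmat M *v cv (e t) + cv (g t)) (at t within {0..})"
      by (simp add: cv_add cv_mat)
  qed
  have hz: "((\<lambda>t. cv (g t)) \<longlongrightarrow> 0) at_top"
    using bounded_linear.tendsto[OF cv_bl g] by (simp add: cv_zero)
  have "((\<lambda>t. cv (e t)) \<longlongrightarrow> 0) at_top"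
    by (rule gop_decay[OF re dz hz]) (simp add: ls(2))
  then have "((\<lambda>t. norm (cv (e t))) \<longlongrightarrow> 0) at_top" by (rule tendsto_norm_zero)
  then have "((\<lambda>t. norm (e t)) \<longlongrightarrow> 0) at_top" by (simp add: cv_norm)
  then show ?thesis by (rule tendsto_norm_zero_cancel)
qed


theorem theorem2:
  fixes A :: "real^'n^'n" and B :: "real^'m^'n"
    and N :: nat and W :: "nat \<Rightarrow> nat \<Rightarrow> real" and k :: "nat \<Rightarrow> nat"
    and K :: "nat \<Rightarrow> real^'n^'m"
    and x :: "nat \<Rightarrow> real \<Rightarrow> real^'n" and u :: "nat \<Rightarrow> real \<Rightarrow> real^'m"
  assumes W_nonneg: "\<forall>i\<in>{1..N}. \<forall>j\<in>{1..N}. W i j \<ge> 0"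
    and tree: "spanning_tree_parent N W k"
    and root: "root_vertex N W N"
    and gains: "\<forall>i\<in>{1..N-1}. hurwitz (A - W i (k i) *\<^sub>R (B ** K i))"
    and protocol_root: "\<forall>t\<ge>0. u N t = 0"
    and protocol: "\<forall>i\<in>{1..N-1}. \<forall>t\<ge>0. u i t = K i *v (W i (k i) *\<^sub>R (x (k i) t - x i t))"
    and dynamics: "\<forall>i\<in>{1..N}. \<forall>t\<ge>0.
        (x i has_vector_derivative (A *v x i t + B *v u i t)) (at t within {0..})"
  shows "\<forall>i\<in>{1..N}. \<forall>j\<in>{1..N}. ((\<lambda>t. norm (x i t - x j t)) \<longlongrightarrow> 0) at_top"
proof -
  have kin: "k i \<in> {1..N}" if "i \<in> {1..N-1}" for i
    using tree that unfolding spanning_tree_parent_def by blast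
  have sub: "i \<in> {1..N-1}" if "i \<in> {1..N}" "i \<noteq> N" for i using that by auto
  have edge: "((\<lambda>t. x i t - x (k i) t) \<longlongrightarrow> 0) at_top"
    if i: "i \<in> {1..N-1}" and uk: "((\<lambda>t. u (k i) t) \<longlongrightarrow> 0) at_top" for i
  proof (rule hurwitz_decay)
    show "hurwitz (A - W i (k i) *\<^sub>R (B ** K i))" using gains i by blast
    show "((\<lambda>t. - (B *v u (k i) t)) \<longlongrightarrow> 0) at_top"
      using tendsto_minus[OF isCont_tendsto_compose[OF matrix_vector_mult_linear_continuous_at[where A=B and z=0] uk]]
      by simp
    show "\<forall>t\<ge>0. ((\<lambda>t. x i t - x (k i) t) has_vector_derivative
        (A - W i (k i) *\<^sub>R (B ** K i)) *v (x i t - x (k i) t) + - (B *v u (k i) t)) (at t within {0..})"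
    proof (intro allI impI)
      fix t :: real assume t: "t \<ge> 0"
      have i1: "i \<in> {1..N}" using i by auto
      have d: "((\<lambda>t. x i t - x (k i) t) has_vector_derivative
          (A *v x i t + B *v u i t) - (A *v x (k i) t + B *v u (k i) t)) (at t within {0..})"
        using dynamics i1 kin[OF i] t by (intro has_vector_derivative_diff) auto
      have ui: "u i t = K i *v (W i (k i) *\<^sub>R (x (k i) t - x i t))" using protocol i t by blast
      have eq: "(A *v x i t + B *v u i t) - (A *v x (k i) t + B *v u (k i) t)
          = (A - W i (k i) *\<^sub>R (B ** K i)) *v (x i t - x (k i) t) + - (B *v u (k i) t)"
        unfolding ui
        by (simp add: matrix_vector_mul_assoc matrix_vector_mult_diff_distrib
            matrix_vector_mult_diff_rdistrib matrix_vector_mult_scaleR scaleR_matrix_vector_assoc[symmetric]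
            algebra_simps)
      show "((\<lambda>t. x i t - x (k i) t) has_vector_derivative
        (A - W i (k i) *\<^sub>R (B ** K i)) *v (x i t - x (k i) t) + - (B *v u (k i) t)) (at t within {0..})"
        using d unfolding eq .
    qed
  qed
  have depth: "\<forall>i\<in>{1..N}. (k ^^ p) i = N \<longrightarrow> ((\<lambda>t. x i t - x N t) \<longlongrightarrow> 0) at_top" for p
  proof (induction p rule: less_induct)
    case (less p)
    show ?case
    proof (intro ballI impI)
      fix i assume i: "i \<in> {1..N}" and pi: "(k ^^ p) i = N"
      show "((\<lambda>t. x i t - x N t) \<longlongrightarrow> 0) at_top"
      proof (cases "i = N")
        case True then show ?thesis by simp
      next
        case False
        then have i': "i \<in> {1..N-1}" using sub i by blast
        from False pi obtain q where q: "p = Suc q" by (cases p) auto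
        have qk: "(k ^^ q) (k i) = N" using pi q funpow_Suc_right[of q k] by (metis comp_apply)
        have ki: "k i \<in> {1..N}" using kin[OF i'] .
        have IHk: "((\<lambda>t. x (k i) t - x N t) \<longlongrightarrow> 0) at_top"
          using less.IH[of q] q ki qk by simp
        have uk: "((\<lambda>t. u (k i) t) \<longlongrightarrow> 0) at_top"
        proof (cases "k i = N")
          case True
          have "\<forall>\<^sub>F t in at_top. u (k i) t = 0"
            unfolding eventually_at_top_linorder using protocol_root True by auto
          then show ?thesis by (rule tendsto_eventually)
        next
          case False
          then have ki': "k i \<in> {1..N-1}" using sub ki by blast
          from False qk obtain r where r: "q = Suc r" by (cases q) auto
          have rk: "(k ^^ r) (k (k i)) = N" using qk r funpow_Suc_right[of r k] by (metis comp_apply)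
          have IHkk: "((\<lambda>t. x (k (k i)) t - x N t) \<longlongrightarrow> 0) at_top"
          proof -
            have "r < p" using q r by simp
            then show ?thesis using less.IH[of r] kin[OF ki'] rk by blast
          qed
          have diff: "((\<lambda>t. x (k (k i)) t - x (k i) t) \<longlongrightarrow> 0) at_top"
            using tendsto_diff[OF IHkk IHk] by simp
          have lim: "((\<lambda>t. K (k i) *v (W (k i) (k (k i)) *\<^sub>R (x (k (k i)) t - x (k i) t))) \<longlongrightarrow> 0) at_top"
          proof -
            have d2: "((\<lambda>t. W (k i) (k (k i)) *\<^sub>R (x (k (k i)) t - x (k i) t)) \<longlongrightarrow> 0) at_top"
              using tendsto_scaleR[OF tendsto_const diff, of "W (k i) (k (k i))"] by simp
            show ?thesis
              using isCont_tendsto_compose[OF matrix_vector_mult_linear_continuous_at[where A="K (k i)" and z=0] d2]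
              by simp
          qed
          have ev: "\<forall>\<^sub>F t in at_top. K (k i) *v (W (k i) (k (k i)) *\<^sub>R (x (k (k i)) t - x (k i) t)) = u (k i) t"
            unfolding eventually_at_top_linorder
          proof (intro exI allI impI)
            fix t :: real assume "t \<ge> 0"
            then show "K (k i) *v (W (k i) (k (k i)) *\<^sub>R (x (k (k i)) t - x (k i) t)) = u (k i) t"
              using protocol ki' by simp
          qed
          show ?thesis using tendsto_cong[OF ev] lim by blast
        qed
        have "((\<lambda>t. (x i t - x (k i) t) + (x (k i) t - x N t)) \<longlongrightarrow> 0 + 0) at_top"
          by (rule tendsto_add[OF edge[OF i' uk] IHk])
        then show ?thesis by simp
      qed
    qed
  qed
  have all: "((\<lambda>t. x i t - x N t) \<longlongrightarrow> 0) at_top" if i: "i \<in> {1..N}" for i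
  proof (cases "i = N")
    case True then show ?thesis by simp
  next
    case False
    then obtain p where "(k ^^ p) i = N"
      using tree sub[OF i False] unfolding spanning_tree_parent_def by blast
    then show ?thesis using depth i by blast
  qed
  show ?thesis
  proof (intro ballI)
    fix i j assume i: "i \<in> {1..N}" and j: "j \<in> {1..N}"
    have "((\<lambda>t. (x i t - x N t) - (x j t - x N t)) \<longlongrightarrow> 0 - 0) at_top"
      by (rule tendsto_diff[OF all[OF i] all[OF j]])
    then have "((\<lambda>t. x i t - x j t) \<longlongrightarrow> 0) at_top" by simp
    then show "((\<lambda>t. norm (x i t - x j t)) \<longlongrightarrow> 0) at_top" by (rule tendsto_norm_zero)
  qed
qed

end
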